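(* (Discrete maximum principle.) For every $R>0$, every discretization $\Delta$ and every $[f]_\Delta\in\mathcal F^R_\Delta$, the discrete state vector $(v_\gamma(k))$ of $[f]_\Delta$ satisfies $$\max_{0\le k\le n}\max_{\gamma\in\mathcal A(\Omega_\Delta)}|v_\gamma(k)|\le e^T\max\Big\{\frac1{\bar b}\|[f]_\Delta\|_{\ell_\infty},\ \|\Phi\|_{L_\infty(\Omega)}\Big\}.$$
   Context: Setting: $d\ge1$, $\Omega\subset\mathbb R^d$ bounded open with Lipschitz boundary, $T>0$. $b:\mathbb R\to\mathbb R$ is increasing, piecewise $C^1$ with finitely many upward jumps, and $\bar b:=\inf\{b'(v):v\text{ not a jump point}\}>0$. $\Phi\in W_2^1(\Omega+B_1(0))$ with $\Phi|_\Omega\in L_\infty(\Omega)$. For $n\in\mathbb N$, $\tau=T/n$, $t_k=k\tau$, $h>0$, $\Delta=(\tau,h)$. For $\gamma\in\mathbb Z^d$: $x_\gamma=h\gamma$, $R^\gamma=\prod_i[\gamma_ih,(\gamma_i+1)h]$. $\mathcal A=\{\gamma:R^\gamma\subset\overline\Omega\}$, $\Omega_\Delta=\bigcup_{\gamma\in\mathcal A}R^\gamma$; $\mathcal A(\Omega_\Delta)$, $\mathcal A(\Omega'_\Delta)$, $\mathcal A(\partial\Omega_\Delta)$ are the $\gamma$ with $x_\gamma$ in $\Omega_\Delta$, its interior, its boundary. $e_i$ is the $i$-th unit multi-index; $w_{\gamma x_i}=(w_{\gamma+e_i}-w_\gamma)/h$; $(w(k))_{\bar t}=(w(k)-w(k-1))/\tau$.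 $\Phi_\gamma=h^{-d}\int_{R^\gamma}\Phi$. Mollifier $\omega_\rho(v)=\mathcal C\rho^{-1}e^{-\rho^2/(\rho^2-v^2)}$ for $|v|\le\rho$, $0$ otherwise (unit integral); $b_n=b*\omega_{1/n}$. Discrete controls $[f]_\Delta=(f_{(\gamma,k)})_{\gamma\in\mathcal A,1\le k\le n}$, $\|[f]_\Delta\|_{\ell_\infty}=\max|f_{(\gamma,k)}|$, $\mathcal F^R_\Delta=\{\|[f]_\Delta\|_{\ell_\infty}\le R\}$. Discrete state vector of $[f]_\Delta$: $(v_\gamma(k))_{\gamma\in\mathcal A(\Omega_\Delta),0\le k\le n}$ with (i) $v_\gamma(0)=\Phi_\gamma$ for $\gamma\in\mathcal A(\Omega'_\Delta)$; (ii) for each $k=1,\dots,n$, $\sum_{\gamma\in\mathcal A}h^d[(b_n(v_\gamma(k)))_{\bar t}\eta_\gamma+\sum_{i=1}^dv_{\gamma x_i}(k)\eta_{\gamma x_i}-f_{(\gamma,k)}\eta_\gamma]=0$ for every $(\eta_\gamma)_{\gamma\in\mathcal A(\Omega_\Delta)}$ vanishing on $\mathcal A(\partial\Omega_\Delta)$; (iii) $v_\gamma(k)=0$ for $\gamma\in\mathcal A(\partial\Omega_\Delta)$, all $k$. It exists and is unique. *)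

theory Defs
  imports "HOL-Analysis.Analysis" "HOL-Probability.Essential_Supremum"
begin

(* Near every boundary point, after a rotation, \<Omega> is the region below the graph of a
   Lipschitz function: e is the (unit) "vertical" direction, g is evaluated on the
   hyperplane orthogonal to e. *)
definition lipschitz_boundary :: "(real^'d) set \<Rightarrow> bool" where
  "lipschitz_boundary \<Omega> \<longleftrightarrow>
     (\<forall>x\<in>frontier \<Omega>. \<exists>r>0. \<exists>e::real^'d. \<exists>g::real^'d \<Rightarrow> real. \<exists>L.
        norm e = 1 \<and> (\<forall>y z. \<bar>g y - g z\<bar> \<le> L * norm (y - z)) \<and>
        \<Omega> \<inter> ball x r = {y \<in> ball x r. y \<bullet> e < g (y - (y \<bullet> e) *\<^sub>R e)})"

definition partial_deriv :: "'d \<Rightarrow> (real^'d \<Rightarrow> real) \<Rightarrow> real^'d \<Rightarrow> real" where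
  "partial_deriv i \<phi> x = deriv (\<lambda>t. \<phi> (x + t *\<^sub>R axis i 1)) 0"

fun iter_partial :: "'d list \<Rightarrow> (real^'d \<Rightarrow> real) \<Rightarrow> real^'d \<Rightarrow> real" where
  "iter_partial [] \<phi> = \<phi>"
| "iter_partial (i # is) \<phi> = partial_deriv i (iter_partial is \<phi>)"

definition smooth_fun :: "(real^'d \<Rightarrow> real) \<Rightarrow> bool" where
  "smooth_fun \<phi> \<longleftrightarrow>
     (\<forall>is. continuous_on UNIV (iter_partial is \<phi>) \<and>
        (\<forall>i x. (\<lambda>t. iter_partial is \<phi> (x + t *\<^sub>R axis i 1)) differentiable (at 0)))"

definition test_fun :: "(real^'d) set \<Rightarrow> (real^'d \<Rightarrow> real) \<Rightarrow> bool" where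
  "test_fun U \<phi> \<longleftrightarrow> smooth_fun \<phi> \<and> compact (closure {x. \<phi> x \<noteq> 0})
                      \<and> closure {x. \<phi> x \<noteq> 0} \<subseteq> U"

definition L2_on :: "(real^'d) set \<Rightarrow> (real^'d \<Rightarrow> real) \<Rightarrow> bool" where
  "L2_on U u \<longleftrightarrow> set_borel_measurable lebesgue U u \<and> set_integrable lebesgue U (\<lambda>x. (u x)\<^sup>2)"

definition W12 :: "(real^'d) set \<Rightarrow> (real^'d \<Rightarrow> real) set" where
  "W12 U = {u. L2_on U u \<and>
     (\<forall>i. \<exists>g. L2_on U g \<and>
        (\<forall>\<phi>. test_fun U \<phi> \<longrightarrow>
           (LINT x:U|lebesgue. u x * partial_deriv i \<phi> x) = - (LINT x:U|lebesgue. g x * \<phi> x)))}"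

definition nbhd1 :: "(real^'d) set \<Rightarrow> (real^'d) set" where
  "nbhd1 \<Omega> = {x + y | x y. x \<in> \<Omega> \<and> y \<in> ball 0 1}"

definition Linf_norm :: "(real^'d) set \<Rightarrow> (real^'d \<Rightarrow> real) \<Rightarrow> ereal" where
  "Linf_norm \<Omega> u = esssup (restrict_space lebesgue \<Omega>) (\<lambda>x. ereal \<bar>u x\<bar>)"

definition jump_points :: "(real \<Rightarrow> real) \<Rightarrow> real set" where
  "jump_points b = {v. \<not> isCont b v}"

definition admissible_b :: "(real \<Rightarrow> real) \<Rightarrow> bool" where
  "admissible_b b \<longleftrightarrow> mono b \<and> finite (jump_points b) \<and>
     (\<forall>j\<in>jump_points b. \<exists>l r. (b \<longlongrightarrow> l) (at_left j) \<and> (b \<longlongrightarrow> r) (at_right j) \<and> l < r) \<and>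
     (\<forall>v. v \<notin> jump_points b \<longrightarrow> b differentiable (at v)) \<and>
     continuous_on (- jump_points b) (deriv b)"

definition b_bar :: "(real \<Rightarrow> real) \<Rightarrow> real" where
  "b_bar b = Inf (deriv b ` (- jump_points b))"

(* mollifier \<omega>_\<rho> with unit integral *)
definition moll_const :: real where
  "moll_const = 1 / (LBINT s=-1..1. exp (- 1 / (1 - s\<^sup>2)))"

definition mollifier :: "real \<Rightarrow> real \<Rightarrow> real" where
  "mollifier \<rho> v = (if \<bar>v\<bar> < \<rho> then moll_const / \<rho> * exp (- \<rho>\<^sup>2 / (\<rho>\<^sup>2 - v\<^sup>2)) else 0)"

definition b_moll :: "(real \<Rightarrow> real) \<Rightarrow> nat \<Rightarrow> real \<Rightarrow> real" where
  "b_moll b n v = (LINT u|lborel. b (v - u) * mollifier (1 / real n) u)"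

definition grid_pt :: "real \<Rightarrow> int^'d \<Rightarrow> real^'d" where
  "grid_pt h \<gamma> = (\<chi> i. h * of_int (\<gamma> $ i))"

definition cell :: "real \<Rightarrow> int^'d \<Rightarrow> (real^'d) set" where
  "cell h \<gamma> = cbox (grid_pt h \<gamma>) (\<chi> i. h * (of_int (\<gamma> $ i) + 1))"

definition cell_idx :: "(real^'d) set \<Rightarrow> real \<Rightarrow> (int^'d) set" where
  "cell_idx \<Omega> h = {\<gamma>. cell h \<gamma> \<subseteq> closure \<Omega>}"

definition grid_dom :: "(real^'d) set \<Rightarrow> real \<Rightarrow> (real^'d) set" where
  "grid_dom \<Omega> h = (\<Union>\<gamma>\<in>cell_idx \<Omega> h. cell h \<gamma>)"

definition nodes :: "(real^'d) set \<Rightarrow> real \<Rightarrow> (int^'d) set" where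
  "nodes \<Omega> h = {\<gamma>. grid_pt h \<gamma> \<in> grid_dom \<Omega> h}"

definition int_nodes :: "(real^'d) set \<Rightarrow> real \<Rightarrow> (int^'d) set" where
  "int_nodes \<Omega> h = {\<gamma>. grid_pt h \<gamma> \<in> interior (grid_dom \<Omega> h)}"

definition bd_nodes :: "(real^'d) set \<Rightarrow> real \<Rightarrow> (int^'d) set" where
  "bd_nodes \<Omega> h = {\<gamma>. grid_pt h \<gamma> \<in> frontier (grid_dom \<Omega> h)}"

definition fdiff :: "real \<Rightarrow> (int^'d \<Rightarrow> real) \<Rightarrow> int^'d \<Rightarrow> 'd \<Rightarrow> real" where
  "fdiff h w \<gamma> i = (w (\<gamma> + axis i 1) - w \<gamma>) / h"

definition cell_avg :: "real \<Rightarrow> (real^'d \<Rightarrow> real) \<Rightarrow> int^'d \<Rightarrow> real" where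
  "cell_avg h \<Phi> \<gamma> = (LINT x:cell h \<gamma>|lebesgue. \<Phi> x) / h ^ CARD('d)"

definition disc_linf :: "(real^'d) set \<Rightarrow> real \<Rightarrow> nat \<Rightarrow> (int^'d \<Rightarrow> nat \<Rightarrow> real) \<Rightarrow> real" where
  "disc_linf \<Omega> h n f = Max {\<bar>f \<gamma> k\<bar> | \<gamma> k. \<gamma> \<in> cell_idx \<Omega> h \<and> k \<in> {1..n}}"

(* discrete state vector (v_\<gamma>(k)) of [f]_\<Delta>, \<Delta> = (T/n, h) *)
definition disc_state ::
  "(real^'d) set \<Rightarrow> real \<Rightarrow> nat \<Rightarrow> real \<Rightarrow> (real \<Rightarrow> real) \<Rightarrow> (real^'d \<Rightarrow> real)
     \<Rightarrow> (int^'d \<Rightarrow> nat \<Rightarrow> real) \<Rightarrow> (int^'d \<Rightarrow> nat \<Rightarrow> real) \<Rightarrow> bool" where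
  "disc_state \<Omega> T n h b \<Phi> f v \<longleftrightarrow>
     (\<forall>\<gamma>\<in>int_nodes \<Omega> h. v \<gamma> 0 = cell_avg h \<Phi> \<gamma>) \<and>
     (\<forall>k\<in>{1..n}. \<forall>\<eta>::int^'d \<Rightarrow> real. (\<forall>\<gamma>\<in>bd_nodes \<Omega> h. \<eta> \<gamma> = 0) \<longrightarrow>
        (\<Sum>\<gamma>\<in>cell_idx \<Omega> h. h ^ CARD('d) *
            ((b_moll b n (v \<gamma> k) - b_moll b n (v \<gamma> (k - 1))) / (T / real n) * \<eta> \<gamma>
             + (\<Sum>i\<in>UNIV. fdiff h (\<lambda>\<mu>. v \<mu> k) \<gamma> i * fdiff h \<eta> \<gamma> i)
             - f \<gamma> k * \<eta> \<gamma>)) = 0) \<and>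
     (\<forall>\<gamma>\<in>bd_nodes \<Omega> h. \<forall>k\<le>n. v \<gamma> k = 0)"

end

theory Submission
  imports Defs
begin



lemma deriv_nonneg_mono:
  assumes "mono b" "(b has_real_derivative d) (at v)"
  shows "0 \<le> d"
proof (rule ccontr)
  assume "\<not> 0 \<le> d"
  then have "d < 0" by simp
  from DERIV_neg_dec_right[OF assms(2) this] obtain e where e: "e > 0"
    "\<And>h. h > 0 \<Longrightarrow> h < e \<Longrightarrow> b v > b (v + h)" by blast
  have "b v > b (v + e/2)" using e by simp
  moreover have "b v \<le> b (v + e/2)" using assms(1) e(1) by (simp add: monoD)
  ultimately show False by simp
qed

lemma b_bar_le:
  assumes "admissible_b b" "v \<notin> jump_points b"
  shows "b_bar b \<le> deriv b v"
proof -
  have bd: "bdd_below (deriv b ` (- jump_points b))"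
  proof (rule bdd_belowI[of _ 0])
    fix d assume "d \<in> deriv b ` (- jump_points b)"
    then obtain w where w: "w \<notin> jump_points b" "d = deriv b w" by auto
    have "b differentiable (at w)" using assms(1) w(1) unfolding admissible_b_def by auto
    then have "(b has_real_derivative deriv b w) (at w)"
      using DERIV_deriv_iff_real_differentiable by blast
    then show "0 \<le> d" using w deriv_nonneg_mono assms(1) unfolding admissible_b_def by blast
  qed
  show ?thesis unfolding b_bar_def using assms(2) by (intro cInf_lower bd) auto
qed

lemma g_mono_nojump:
  assumes adm: "admissible_b b" and c: "b_bar b > 0"
    and yx: "y < x" and nj: "jump_points b \<inter> {y<..<x} = {}"
  shows "b y - b_bar b * y \<le> b x - b_bar b * x"
proof -
  define c where "c = b_bar b"
  define g where "g t = b t - c * t" for t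
  have mono: "mono b" using adm unfolding admissible_b_def by auto
  have st: "g s \<le> g t" if "y < s" "s \<le> t" "t < x" for s t
  proof -
    have hd: "\<exists>d. (g has_real_derivative d) (at z) \<and> 0 \<le> d" if "s < z" "z < t" for z
    proof -
      have zj: "z \<notin> jump_points b" using nj \<open>y<s\<close> \<open>t<x\<close> that by auto
      have "b differentiable (at z)" using adm zj unfolding admissible_b_def by auto
      then have "(b has_real_derivative deriv b z) (at z)"
        using DERIV_deriv_iff_real_differentiable by blast
      then have "(g has_real_derivative deriv b z - c) (at z)"
        unfolding g_def by (auto intro!: derivative_eq_intros)
      moreover have "c \<le> deriv b z" unfolding c_def using b_bar_le[OF adm zj] .
      ultimately show ?thesis by auto
    qed
    have "continuous_on {s..t} g"
    proof -
      have "\<forall>z\<in>{s..t}. isCont b z"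
        using nj \<open>y<s\<close> \<open>t<x\<close> unfolding jump_points_def by auto
      then have "continuous_on {s..t} b" by (simp add: continuous_at_imp_continuous_on)
      then show ?thesis unfolding g_def by (auto intro!: continuous_intros)
    qed
    then show ?thesis using DERIV_nonneg_imp_increasing_open[OF \<open>s\<le>t\<close> hd] by blast
  qed
  have cpos: "c > 0" using c c_def by simp
  have "g y \<le> g x + e" if e: "e > 0" for e
  proof -
    define d where "d = min ((x - y)/3) (e / (2*c))"
    have d: "d > 0" "d \<le> (x-y)/3" "d \<le> e/(2*c)"
      using yx e cpos unfolding d_def
      subgoal by simp
      subgoal by (rule min.cobounded1)
      subgoal by (rule min.cobounded2)
      done
    have "2*c*d \<le> e" using d(3) cpos by (simp add: field_simps)
    have b1: "b y \<le> b (y + d)" using mono d by (simp add: monoD)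
    have b2: "b (x - d) \<le> b x" using mono d by (simp add: monoD)
    have "g (y + d) \<le> g (x - d)" using st[of "y+d" "x-d"] d by simp
    then have "b (y+d) - c*(y+d) \<le> b (x-d) - c*(x-d)" unfolding g_def .
    then show ?thesis unfolding g_def using b1 b2 \<open>2*c*d \<le> e\<close>
      by (simp add: algebra_simps)
  qed
  then have "g y \<le> g x" by (rule field_le_epsilon)
  then show ?thesis unfolding g_def c_def .
qed

lemma b_growth:
  assumes adm: "admissible_b b" and c: "b_bar b > 0" and yx: "y \<le> x"
  shows "b_bar b * (x - y) \<le> b x - b y"
proof -
  define J where "J = jump_points b"
  have fin: "finite J" using adm unfolding admissible_b_def J_def by auto
  have main: "\<forall>y x. card (J \<inter> {y<..<x}) = m \<longrightarrow> y \<le> x \<longrightarrow>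
     b y - b_bar b * y \<le> b x - b_bar b * x" for m
  proof (induction m rule: less_induct)
    case (less m)
    show ?case
    proof (intro allI impI)
      fix y x assume m: "card (J \<inter> {y<..<x}) = m" and yx: "y \<le> x"
      show "b y - b_bar b * y \<le> b x - b_bar b * x"
      proof (cases "J \<inter> {y<..<x} = {}")
        case True
        show ?thesis
        proof (cases "y = x")
          case False
          then show ?thesis using g_mono_nojump[OF adm c, of y x] True yx J_def by auto
        qed simp
      next
        case False
        then obtain j where j: "j \<in> J" "y < j" "j < x" by auto
        have f1: "finite (J \<inter> {y<..<x})" using fin by auto
        have c1: "card (J \<inter> {y<..<j}) < m"
          unfolding m[symmetric] using j f1 by (intro psubset_card_mono) auto
        have c2: "card (J \<inter> {j<..<x}) < m"
          unfolding m[symmetric] using j f1 by (intro psubset_card_mono) auto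
        have "b y - b_bar b * y \<le> b j - b_bar b * j" using less.IH[OF c1] j by auto
        also have "\<dots> \<le> b x - b_bar b * x" using less.IH[OF c2] j by auto
        finally show ?thesis .
      qed
    qed
  qed
  show ?thesis using main[of "card (J \<inter> {y<..<x})"] yx by (simp add: algebra_simps)
qed




definition phi0 :: "real \<Rightarrow> real" where
  "phi0 s = indicator {-1<..<1} s * exp (- 1 / (1 - s\<^sup>2))"

lemma phi0_meas[measurable]: "phi0 \<in> borel_measurable borel"
  unfolding phi0_def by measurable

lemma phi0_bound: "\<bar>phi0 s\<bar> \<le> indicator {-1..1} s"
proof (cases "s \<in> {-1<..<1}")
  case True
  then have "\<bar>s\<bar> < 1" by auto
  then have "\<bar>s\<bar>\<^sup>2 < 1\<^sup>2" by (intro power_strict_mono) auto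
  then have "1 - s\<^sup>2 > 0" by simp
  then have "- 1 / (1 - s\<^sup>2) \<le> 0" by (simp add: divide_nonpos_pos)
  then have "exp (- 1 / (1 - s\<^sup>2)) \<le> 1" by simp
  then show ?thesis using True unfolding phi0_def by (auto simp: indicator_def)
qed (auto simp: phi0_def indicator_def)

lemma phi0_nonneg: "0 \<le> phi0 s"
  unfolding phi0_def by (auto simp: indicator_def)

lemma phi0_int: "integrable lborel phi0"
proof -
  have 1: "integrable lborel (indicator {-1..1::real} :: real \<Rightarrow> real)"
    by (auto intro!: integrable_real_indicator)
  have 2: "phi0 \<in> borel_measurable lborel" by simp
  have 3: "AE x in lborel. norm (phi0 x) \<le> norm (indicator {-1..1::real} x :: real)"
    using phi0_bound by (auto simp: indicator_def)
  show ?thesis by (rule Bochner_Integration.integrable_bound[OF 1 2 3])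
qed

lemma moll_I: "(LBINT s=-1..1. exp (- 1 / (1 - s\<^sup>2))) = integral\<^sup>L lborel phi0"
proof -
  have h: "(-1::ereal) = ereal (-1)" "(1::ereal) = ereal 1"
      by (metis one_ereal_def uminus_ereal.simps(1))+
  have e: "einterval (-1) 1 = {-1<..<1::real}"
    using h by (simp only:) (auto simp: einterval_def)
  have "(-1::ereal) \<le> 1" by (simp only: h ereal_less_eq) simp
  then show ?thesis
    unfolding interval_lebesgue_integral_def set_lebesgue_integral_def phi0_def
    using e by (simp add: e)
qed

lemma phi0_pos: "integral\<^sup>L lborel phi0 > 0"
proof -
  have "exp (-4/3::real) * indicator {-1/2..1/2::real} s \<le> phi0 s" for s :: real
  proof (cases "s \<in> {-1/2..1/2}")
    case True
    then have "\<bar>s\<bar> \<le> 1/2" by auto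
    then have "\<bar>s\<bar>\<^sup>2 \<le> (1/2)\<^sup>2" by (intro power_mono) auto
    then have s2: "s\<^sup>2 \<le> 1/4" by (simp add: power2_eq_square)
    have "1 / (1 - s\<^sup>2) \<le> 4/3" using s2 by (simp add: field_simps)
    then have "exp (-4/3) \<le> exp (- 1 / (1 - s\<^sup>2))" by simp
    then show ?thesis using True unfolding phi0_def by (auto simp: indicator_def)
  qed (simp add: phi0_nonneg)
  then have "integral\<^sup>L lborel (\<lambda>s. exp (-4/3::real) * indicator {-1/2..1/2::real} s) \<le> integral\<^sup>L lborel phi0"
    by (intro integral_mono phi0_int) (auto intro!: integrable_real_indicator)
  moreover have "integral\<^sup>L lborel (\<lambda>s. exp (-4/3::real) * indicator {-1/2..1/2::real} s) = exp (-4/3)"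
    by simp
  ultimately show ?thesis by (smt (verit) exp_gt_zero)
qed

lemma moll_const_eq: "moll_const = 1 / integral\<^sup>L lborel phi0"
  unfolding moll_const_def moll_I ..

lemma moll_const_pos: "moll_const > 0"
  unfolding moll_const_eq using phi0_pos by simp

lemma mollifier_nonneg: "\<rho> > 0 \<Longrightarrow> 0 \<le> mollifier \<rho> u"
  unfolding mollifier_def using moll_const_pos by auto

lemma mollifier_bound: "\<rho> > 0 \<Longrightarrow> \<bar>mollifier \<rho> u\<bar> \<le> moll_const / \<rho> * indicator {-\<rho>..\<rho>} u"
proof -
  assume r: "\<rho> > 0"
  show ?thesis
  proof (cases "\<bar>u\<bar> < \<rho>")
    case True
    have "\<rho>\<^sup>2 - u\<^sup>2 > 0" proof -
      have "\<bar>u\<bar>\<^sup>2 < \<rho>\<^sup>2" using True by (intro power_strict_mono) auto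
      then show ?thesis by simp
    qed
    then have "- \<rho>\<^sup>2 / (\<rho>\<^sup>2 - u\<^sup>2) \<le> 0" by (simp add: divide_nonpos_pos)
    then have "exp (- \<rho>\<^sup>2 / (\<rho>\<^sup>2 - u\<^sup>2)) \<le> 1" by simp
    then have "moll_const / \<rho> * exp (- \<rho>\<^sup>2 / (\<rho>\<^sup>2 - u\<^sup>2)) \<le> moll_const / \<rho> * 1"
      using moll_const_pos r by (intro mult_left_mono) auto
    then show ?thesis using True r moll_const_pos unfolding mollifier_def
      by (auto simp: indicator_def)
  qed (use r moll_const_pos in \<open>auto simp: mollifier_def indicator_def\<close>)
qed

lemma mollifier_meas[measurable]: "mollifier \<rho> \<in> borel_measurable borel"
  unfolding mollifier_def by measurable

lemma mollifier_int: assumes r: "\<rho> > 0" shows "integrable lborel (mollifier \<rho>)"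
proof -
  have 1: "integrable lborel (\<lambda>u. moll_const / \<rho> * indicator {-\<rho>..\<rho>} u :: real)"
    using r by (intro integrable_mult_right integrable_real_indicator) auto
  have 2: "mollifier \<rho> \<in> borel_measurable lborel" by simp
  have 3: "AE x in lborel. norm (mollifier \<rho> x) \<le> norm (moll_const / \<rho> * indicator {-\<rho>..\<rho>} x :: real)"
    using mollifier_bound[OF r] moll_const_pos r by (auto simp: indicator_def)
  show ?thesis by (rule Bochner_Integration.integrable_bound[OF 1 2 3])
qed

lemma mollifier_unit: assumes r: "\<rho> > 0" shows "integral\<^sup>L lborel (mollifier \<rho>) = 1"
proof -
  have eq: "mollifier \<rho> (\<rho> * s) = moll_const / \<rho> * phi0 s" for s
  proof (cases "\<bar>s\<bar> < 1")
    case True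
    have "1 - s\<^sup>2 > 0" proof -
      have "\<bar>s\<bar>\<^sup>2 < 1\<^sup>2" using True by (intro power_strict_mono) auto
      then show ?thesis by simp
    qed
    have "\<rho>\<^sup>2 - (\<rho> * s)\<^sup>2 = \<rho>\<^sup>2 * (1 - s\<^sup>2)" by (simp add: algebra_simps power_mult_distrib)
    then have e: "- \<rho>\<^sup>2 / (\<rho>\<^sup>2 - (\<rho> * s)\<^sup>2) = - 1 / (1 - s\<^sup>2)" using r \<open>1 - s\<^sup>2 > 0\<close>
      by (simp add: field_simps)
    have "\<bar>\<rho> * s\<bar> < \<rho>" using True r by (simp add: abs_mult)
    then have "mollifier \<rho> (\<rho> * s) = moll_const / \<rho> * exp (- \<rho>\<^sup>2 / (\<rho>\<^sup>2 - (\<rho> * s)\<^sup>2))"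
      unfolding mollifier_def by simp
    also have "\<dots> = moll_const / \<rho> * exp (- 1 / (1 - s\<^sup>2))" by (simp only: e)
    also have "\<dots> = moll_const / \<rho> * phi0 s" using True unfolding phi0_def by (auto simp: indicator_def abs_less_iff)
    finally show ?thesis .
  next
    case False
    then have "\<not> \<bar>\<rho> * s\<bar> < \<rho>" using r by (simp add: abs_mult)
    then show ?thesis using False unfolding mollifier_def phi0_def by (auto simp: indicator_def abs_less_iff)
  qed
  have "integral\<^sup>L lborel (mollifier \<rho>) = \<bar>\<rho>\<bar> *\<^sub>R (LBINT s. mollifier \<rho> (0 + \<rho> * s))"
    using r by (intro lborel_integral_real_affine) simp
  also have "\<dots> = \<rho> * (moll_const / \<rho> * integral\<^sup>L lborel phi0)" using r by (simp add: eq)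
  also have "\<dots> = 1" using r phi0_pos unfolding moll_const_eq by simp
  finally show ?thesis .
qed




lemma bm_int:
  assumes mono: "mono b" and r: "\<rho> > 0"
  shows "integrable lborel (\<lambda>u. b (x - u) * mollifier \<rho> u)"
proof -
  have bm: "b \<in> borel_measurable borel" using borel_measurable_mono[OF mono] .
  define B where "B = \<bar>b (x - \<rho>)\<bar> + \<bar>b (x + \<rho>)\<bar>"
  have 1: "integrable lborel (\<lambda>u. B * mollifier \<rho> u)"
    using mollifier_int[OF r] by (rule integrable_mult_right)
  have bx: "(\<lambda>u. b (x - u)) \<in> borel_measurable borel"
  proof (rule measurable_compose[OF _ bm])
    show "(\<lambda>u. x - u) \<in> borel_measurable borel"
      by (intro borel_measurable_continuous_onI continuous_intros)
  qed
  have 2: "(\<lambda>u. b (x - u) * mollifier \<rho> u) \<in> borel_measurable lborel"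
  proof -
    have "(\<lambda>u. b (x - u) * mollifier \<rho> u) \<in> borel_measurable borel"
      by (rule borel_measurable_times[OF bx mollifier_meas])
    then show ?thesis by (subst measurable_cong_sets[OF sets_lborel refl])
  qed
  have "norm (b (x - u) * mollifier \<rho> u) \<le> norm (B * mollifier \<rho> u)" for u
  proof (cases "\<bar>u\<bar> < \<rho>")
    case True
    have "b (x - \<rho>) \<le> b (x - u)" "b (x - u) \<le> b (x + \<rho>)"
      using True by (auto intro: monoD[OF mono])
    then have "\<bar>b (x - u)\<bar> \<le> B" unfolding B_def by linarith
    moreover have "B \<ge> 0" unfolding B_def by simp
    ultimately show ?thesis using mollifier_nonneg[OF r, of u]
      by (simp add: abs_mult mult_right_mono)
  qed (simp add: mollifier_def)
  then have 3: "AE u in lborel. norm (b (x - u) * mollifier \<rho> u) \<le> norm (B * mollifier \<rho> u)"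
    by simp
  show ?thesis by (rule Bochner_Integration.integrable_bound[OF 1 2 3])
qed

lemma b_moll_growth:
  assumes adm: "admissible_b b" and c: "b_bar b > 0" and n: "n > 0" and yx: "y \<le> x"
  shows "b_bar b * (x - y) \<le> b_moll b n x - b_moll b n y"
proof -
  define \<rho> where "\<rho> = 1 / real n"
  have r: "\<rho> > 0" using n unfolding \<rho>_def by simp
  have mono: "mono b" using adm unfolding admissible_b_def by auto
  have ix: "integrable lborel (\<lambda>u. b (x - u) * mollifier \<rho> u)" by (rule bm_int[OF mono r])
  have iy: "integrable lborel (\<lambda>u. b (y - u) * mollifier \<rho> u)" by (rule bm_int[OF mono r])
  have "b_bar b * (x - y) = (LINT u|lborel. b_bar b * (x - y) * mollifier \<rho> u)"
    using mollifier_unit[OF r] by simp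
  also have "\<dots> \<le> (LINT u|lborel. b (x - u) * mollifier \<rho> u - b (y - u) * mollifier \<rho> u)"
  proof (rule integral_mono)
    show "integrable lborel (\<lambda>u. b_bar b * (x - y) * mollifier \<rho> u)"
      using mollifier_int[OF r] by (rule integrable_mult_right)
    show "integrable lborel (\<lambda>u. b (x - u) * mollifier \<rho> u - b (y - u) * mollifier \<rho> u)"
      using ix iy by (rule Bochner_Integration.integrable_diff)
    fix u
    have "b_bar b * ((x - u) - (y - u)) \<le> b (x - u) - b (y - u)"
      using b_growth[OF adm c, of "y - u" "x - u"] yx by simp
    then have "b_bar b * (x - y) * mollifier \<rho> u \<le> (b (x - u) - b (y - u)) * mollifier \<rho> u"
      using mollifier_nonneg[OF r, of u] by (intro mult_right_mono) auto
    then show "b_bar b * (x - y) * mollifier \<rho> u \<le> b (x - u) * mollifier \<rho> u - b (y - u) * mollifier \<rho> u"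
      by (simp add: algebra_simps)
  qed
  also have "\<dots> = b_moll b n x - b_moll b n y"
    unfolding b_moll_def \<rho>_def[symmetric] using ix iy by (rule Bochner_Integration.integral_diff)
  finally show ?thesis .
qed




lemma finite_grid:
  fixes S :: "(real^'d) set"
  assumes "bounded S" "h > 0"
  shows "finite {\<gamma>::int^'d. grid_pt h \<gamma> \<in> S}"
proof -
  obtain B where B: "\<And>x. x \<in> S \<Longrightarrow> norm x \<le> B" using assms(1) bounded_iff by blast
  define K where "K = \<lceil>B / h\<rceil>"
  have sub: "{\<gamma>::int^'d. grid_pt h \<gamma> \<in> S} \<subseteq> vec_lambda ` (Pi\<^sub>E UNIV (\<lambda>_. {-K..K}))"
  proof
    fix \<gamma> :: "int^'d" assume "\<gamma> \<in> {\<gamma>. grid_pt h \<gamma> \<in> S}"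
    then have n: "norm (grid_pt h \<gamma>) \<le> B" using B by auto
    have "vec_nth \<gamma> i \<in> {-K..K}" for i
    proof -
      have "\<bar>h * of_int (\<gamma> $ i)\<bar> \<le> B"
        using component_le_norm_cart[of "grid_pt h \<gamma>" i] n unfolding grid_pt_def by simp
      then have "h * \<bar>of_int (\<gamma> $ i)\<bar> \<le> B" using assms(2) by (simp add: abs_mult)
      then have "\<bar>of_int (\<gamma> $ i)\<bar> \<le> B / h" using assms(2) by (simp add: field_simps)
      then have "\<bar>\<gamma> $ i\<bar> \<le> K" unfolding K_def by linarith
      then show ?thesis by auto
    qed
    then have "vec_nth \<gamma> \<in> Pi\<^sub>E UNIV (\<lambda>_. {-K..K})" by auto
    moreover have "\<gamma> = vec_lambda (vec_nth \<gamma>)" by simp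
    ultimately show "\<gamma> \<in> vec_lambda ` (Pi\<^sub>E UNIV (\<lambda>_. {-K..K}))" by blast
  qed
  show ?thesis by (rule finite_subset[OF sub]) (auto intro!: finite_imageI finite_PiE)
qed

lemma grid_pt_in_cell:
  assumes "h > 0" shows "grid_pt h \<gamma> \<in> cell h \<gamma>"
  using assms unfolding cell_def grid_pt_def by (simp add: mem_box_cart)

lemma grid_pt_succ_in_cell:
  assumes "h > 0" shows "grid_pt h (\<gamma> + axis i 1) \<in> cell h \<gamma>"
  using assms unfolding cell_def grid_pt_def by (auto simp: mem_box_cart axis_def)

lemma grid_dom_sub: "grid_dom \<Omega> h \<subseteq> closure \<Omega>"
  unfolding grid_dom_def cell_idx_def by auto

lemma cell_idx_nodes: "h > 0 \<Longrightarrow> \<gamma> \<in> cell_idx \<Omega> h \<Longrightarrow> \<gamma> \<in> nodes \<Omega> h"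
  unfolding nodes_def grid_dom_def using grid_pt_in_cell by blast

lemma cell_idx_succ_nodes: "h > 0 \<Longrightarrow> \<gamma> \<in> cell_idx \<Omega> h \<Longrightarrow> \<gamma> + axis i 1 \<in> nodes \<Omega> h"
  unfolding nodes_def grid_dom_def using grid_pt_succ_in_cell by blast

lemma finite_nodes: "bounded \<Omega> \<Longrightarrow> h > 0 \<Longrightarrow> finite (nodes \<Omega> h)"
proof -
  assume a: "bounded \<Omega>" "h > 0"
  have "nodes \<Omega> h \<subseteq> {\<gamma>. grid_pt h \<gamma> \<in> closure \<Omega>}"
    unfolding nodes_def using grid_dom_sub by blast
  then show ?thesis using finite_grid[OF bounded_closure[OF a(1)] a(2)] finite_subset by blast
qed

lemma finite_cell_idx: "bounded \<Omega> \<Longrightarrow> h > 0 \<Longrightarrow> finite (cell_idx \<Omega> h)"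
  using finite_nodes cell_idx_nodes by (metis finite_subset subsetI)

lemma nodes_split:
  assumes "bounded \<Omega>" "h > 0" "\<gamma> \<in> nodes \<Omega> h"
  shows "\<gamma> \<in> int_nodes \<Omega> h \<or> \<gamma> \<in> bd_nodes \<Omega> h"
proof -
  have "closed (grid_dom \<Omega> h)" unfolding grid_dom_def cell_def
    using finite_cell_idx[OF assms(1,2)] by (intro closed_UN) auto
  then show ?thesis using assms(3) unfolding nodes_def int_nodes_def bd_nodes_def frontier_def
    by auto
qed

lemma int_nodes_cell_idx:
  fixes \<Omega> :: "(real^'d) set"
  assumes h: "h > 0" and g: "\<gamma> \<in> int_nodes \<Omega> h"
  shows "\<gamma> \<in> cell_idx \<Omega> h"
proof -
  obtain e where e: "e > 0" "ball (grid_pt h \<gamma>) e \<subseteq> grid_dom \<Omega> h"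
    using g unfolding int_nodes_def mem_interior by blast
  define \<epsilon> where "\<epsilon> = min (h/2) (e / (2 * real CARD('d)))"
  have ep: "\<epsilon> > 0" "\<epsilon> < h" "\<epsilon> * real CARD('d) < e"
  proof -
    show "\<epsilon> > 0" using h e unfolding \<epsilon>_def by simp
    show "\<epsilon> < h" using h unfolding \<epsilon>_def by linarith
    have "\<epsilon> \<le> e / (2 * real CARD('d))" unfolding \<epsilon>_def by (rule min.cobounded2)
    then have "\<epsilon> * real CARD('d) \<le> e / 2" by (simp add: field_simps)
    then show "\<epsilon> * real CARD('d) < e" using e by linarith
  qed
  define q :: "real^'d" where "q = (\<chi> i. h * of_int (\<gamma> $ i) + \<epsilon>)"
  have "norm (grid_pt h \<gamma> - q) \<le> (\<Sum>i\<in>UNIV. \<bar>(grid_pt h \<gamma> - q) $ i\<bar>)" by (rule norm_le_l1_cart)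
  also have "\<dots> = \<epsilon> * real CARD('d)" using ep unfolding q_def grid_pt_def by simp
  finally have "q \<in> ball (grid_pt h \<gamma>) e" using ep by (simp add: dist_norm)
  then have "q \<in> grid_dom \<Omega> h" using e by blast
  then obtain \<gamma>' where g': "\<gamma>' \<in> cell_idx \<Omega> h" "q \<in> cell h \<gamma>'" unfolding grid_dom_def by blast
  have "\<gamma>' $ i = \<gamma> $ i" for i
  proof -
    have c: "h * of_int (\<gamma>' $ i) \<le> h * of_int (\<gamma> $ i) + \<epsilon>"
            "h * of_int (\<gamma> $ i) + \<epsilon> \<le> h * (of_int (\<gamma>' $ i) + 1)"
      using g'(2) unfolding cell_def grid_pt_def q_def by (auto simp: mem_box_cart)
    have "h * of_int (\<gamma>' $ i) < h * (of_int (\<gamma> $ i) + 1)" using c(1) ep by (simp add: algebra_simps)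
    then have "real_of_int (\<gamma>' $ i) < real_of_int (\<gamma> $ i) + 1" using h mult_less_cancel_left_pos by blast
    then have "real_of_int (\<gamma>' $ i) < real_of_int (\<gamma> $ i + 1)" by simp
    then have 1: "\<gamma>' $ i < \<gamma> $ i + 1" by (simp only: of_int_less_iff)
    have "h * of_int (\<gamma> $ i) < h * (of_int (\<gamma>' $ i) + 1)" using c(2) ep by (simp add: algebra_simps)
    then have "real_of_int (\<gamma> $ i) < real_of_int (\<gamma>' $ i) + 1" using h mult_less_cancel_left_pos by blast
    then have "real_of_int (\<gamma> $ i) < real_of_int (\<gamma>' $ i + 1)" by simp
    then have 2: "\<gamma> $ i < \<gamma>' $ i + 1" by (simp only: of_int_less_iff)
    show ?thesis using 1 2 by linarith
  qed
  then have "\<gamma>' = \<gamma>" by (simp add: vec_eq_iff)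
  then show ?thesis using g' by simp
qed

lemma lip_cont:
  fixes g :: "real^'d \<Rightarrow> real"
  assumes "\<forall>y z. \<bar>g y - g z\<bar> \<le> L * norm (y - z)"
  shows "continuous_on UNIV g"
proof -
  have "(max L 0)-lipschitz_on UNIV g"
  proof (rule lipschitz_onI)
    fix y z :: "real^'d"
    have "\<bar>g y - g z\<bar> \<le> L * norm (y - z)" using assms by blast
    also have "\<dots> \<le> max L 0 * norm (y - z)" by (intro mult_right_mono) auto
    finally show "dist (g y) (g z) \<le> max L 0 * dist y z" by (simp add: dist_real_def dist_norm)
  qed simp
  then show ?thesis by (rule lipschitz_on_continuous_on)
qed

lemma lip_int_closure:
  fixes \<Omega> :: "(real^'d) set"
  assumes op: "open \<Omega>" and lb: "lipschitz_boundary \<Omega>"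
  shows "interior (closure \<Omega>) \<subseteq> \<Omega>"
proof
  fix x assume xi: "x \<in> interior (closure \<Omega>)"
  show "x \<in> \<Omega>"
  proof (rule ccontr)
    assume xn: "x \<notin> \<Omega>"
    have "x \<in> closure \<Omega>" using xi interior_subset by blast
    then have "x \<in> frontier \<Omega>" using xn op by (simp add: frontier_def interior_open)
    then obtain r e g L where r: "r > 0" and ne: "norm (e::real^'d) = 1"
      and gl: "\<forall>y z. \<bar>g y - g z\<bar> \<le> L * norm (y - z)"
      and eq: "\<Omega> \<inter> ball x r = {y \<in> ball x r. y \<bullet> e < g (y - (y \<bullet> e) *\<^sub>R e)}"
      using lb unfolding lipschitz_boundary_def by blast
    define K where "K = {y. y \<bullet> e \<le> g (y - (y \<bullet> e) *\<^sub>R e)}"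
    have gc: "continuous_on UNIV g" by (rule lip_cont[OF gl])
    have "continuous_on UNIV (\<lambda>y. g (y - (y \<bullet> e) *\<^sub>R e))"
      by (rule continuous_on_compose2[OF gc]) (auto intro!: continuous_intros)
    then have cK: "closed K" unfolding K_def
      by (intro closed_Collect_le) (auto intro!: continuous_intros)
    have inK: "z \<in> K" if "z \<in> ball x r" "z \<in> closure \<Omega>" for z
    proof -
      have "z \<in> closure (ball x r \<inter> \<Omega>)" using open_Int_closure_subset[of "ball x r" \<Omega>] that by auto
      also have "ball x r \<inter> \<Omega> \<subseteq> K"
      proof
        fix z assume "z \<in> ball x r \<inter> \<Omega>"
        then have "z \<in> {y \<in> ball x r. y \<bullet> e < g (y - (y \<bullet> e) *\<^sub>R e)}" using eq by blast
        then show "z \<in> K" unfolding K_def by simp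
      qed
      then have "closure (ball x r \<inter> \<Omega>) \<subseteq> K" using cK by (simp add: closure_minimal)
      finally show ?thesis .
    qed
    obtain s where s: "s > 0" "ball x s \<subseteq> closure \<Omega>" using xi mem_interior by blast
    define t where "t = min r s / 2"
    have t: "t > 0" "t < r" "t < s" using r s unfolding t_def by auto
    define y where "y = x + t *\<^sub>R e"
    have ee: "e \<bullet> e = 1" using ne by (simp add: norm_eq_1)
    have dy: "dist x y = t" unfolding y_def using ne t by (simp add: dist_norm)
    have "y \<in> K" using inK[of y] dy t s by auto
    moreover have ye: "y \<bullet> e = x \<bullet> e + t" unfolding y_def using ee by (simp add: inner_add_left)
    moreover have "y - (y \<bullet> e) *\<^sub>R e = x - (x \<bullet> e) *\<^sub>R e"
      unfolding ye unfolding y_def by (simp add: algebra_simps scaleR_add_left)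
    ultimately have 1: "x \<bullet> e + t \<le> g (x - (x \<bullet> e) *\<^sub>R e)" unfolding K_def by simp
    have "x \<in> ball x r" using r by simp
    then have "\<not> (x \<bullet> e < g (x - (x \<bullet> e) *\<^sub>R e))" using eq xn by blast
    then show False using 1 t by linarith
  qed
qed




lemma cell_box_ne: "h > 0 \<Longrightarrow> box (grid_pt h \<gamma>) (\<chi> i. h * (of_int (\<gamma> $ i) + 1)) \<noteq> {}"
proof -
  assume h: "h > 0"
  have "(\<chi> i. h * of_int (\<gamma> $ i) + h/2) \<in> box (grid_pt h \<gamma>) (\<chi> i. h * (of_int (\<gamma> $ i) + 1))"
    using h unfolding grid_pt_def by (auto simp: mem_box_cart algebra_simps)
  then show ?thesis by blast
qed

lemma cell_measure: "h > 0 \<Longrightarrow> measure lebesgue (cell h (\<gamma>::int^'d)) = h ^ CARD('d)"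
proof -
  assume h: "h > 0"
  have ne: "cell h \<gamma> \<noteq> {}" using grid_pt_in_cell[OF h] by blast
  have "measure lebesgue (cell h \<gamma>) = measure lborel (cell h \<gamma>)"
    unfolding cell_def by (rule measure_completion) simp
  also have "\<dots> = (\<Prod>i\<in>UNIV. (\<chi> i. h * (of_int (\<gamma> $ i) + 1)) $ i - grid_pt h \<gamma> $ i)"
    using ne unfolding cell_def by (rule content_cbox_cart)
  also have "\<dots> = h ^ CARD('d)" unfolding grid_pt_def by (simp add: algebra_simps)
  finally show ?thesis .
qed

lemma cell_avg_bound:
  fixes \<Omega> :: "(real^'d) set"
  assumes op: "open \<Omega>" and lb: "lipschitz_boundary \<Omega>" and h: "h > 0"
    and g: "\<gamma> \<in> cell_idx \<Omega> h" and fin: "Linf_norm \<Omega> \<Phi> < \<infinity>"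
  shows "ereal \<bar>cell_avg h \<Phi> \<gamma>\<bar> \<le> Linf_norm \<Omega> \<Phi>"
proof -
  define E where "E = Linf_norm \<Omega> \<Phi>"
  define C where "C = cell h \<gamma>"
  define a where "a = grid_pt h \<gamma>"
  define b :: "real^'d" where "b = (\<chi> i. h * (of_int (\<gamma> $ i) + 1))"
  have Cab: "C = cbox a b" unfolding C_def cell_def a_def b_def ..
  have A1: "AE x in restrict_space lebesgue \<Omega>. ereal \<bar>\<Phi> x\<bar> \<le> E"
    unfolding E_def Linf_norm_def by (rule esssup_AE)
  have Om: "\<Omega> \<inter> space lebesgue \<in> sets lebesgue" using op by simp
  have A2: "AE x in lebesgue. x \<in> \<Omega> \<longrightarrow> ereal \<bar>\<Phi> x\<bar> \<le> E"
    using A1 AE_restrict_space_iff[OF Om] by simp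
  have "negligible (cbox a b - box a b)" by (rule negligible_frontier_interval)
  then have A3: "AE x in lebesgue. x \<notin> cbox a b - box a b"
    by (intro AE_not_in) (simp add: negligible_iff_null_sets)
  have "box a b = interior C" unfolding Cab by simp
  also have "\<dots> \<subseteq> interior (closure \<Omega>)" using g unfolding cell_idx_def C_def
    by (intro interior_mono) simp
  also have "\<dots> \<subseteq> \<Omega>" by (rule lip_int_closure[OF op lb])
  finally have boxO: "box a b \<subseteq> \<Omega>" .
  have A4: "AE x in lebesgue. x \<in> C \<longrightarrow> ereal \<bar>\<Phi> x\<bar> \<le> E"
    using A2 A3 by eventually_elim (use boxO Cab in auto)
  have Csets: "C \<in> sets lebesgue" unfolding Cab by simp
  have Cpos: "emeasure lebesgue C \<noteq> 0"
  proof
    assume "emeasure lebesgue C = 0"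
    then have "negligible C" using negligible_iff_emeasure0[OF Csets] by simp
    then have "box a b = {}" unfolding Cab negligible_interval(1) .
    then show False using cell_box_ne[OF h, of \<gamma>] unfolding a_def b_def by simp
  qed
  have E0: "E \<ge> 0"
  proof (rule ccontr)
    assume "\<not> E \<ge> 0"
    then have "E < 0" by simp
    have imp: "x \<notin> C" if "x \<in> C \<longrightarrow> ereal \<bar>\<Phi> x\<bar> \<le> E" for x
    proof
      assume "x \<in> C"
      then have "ereal \<bar>\<Phi> x\<bar> \<le> E" using that by simp
      moreover have "ereal 0 \<le> ereal \<bar>\<Phi> x\<bar>" by simp
      ultimately show False using \<open>E < 0\<close> by (metis zero_ereal_def order.trans not_le)
    qed
    have "AE x in lebesgue. x \<notin> C" using eventually_mono[OF A4 imp] .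
    then have "emeasure lebesgue C = 0" using AE_iff_measurable[OF Csets] by auto
    then show False using Cpos by simp
  qed
  obtain L where L: "E = ereal L" using E0 fin unfolding E_def[symmetric]
    by (cases E) auto
  have L0: "L \<ge> 0" using E0 L by simp
  have A5: "AE x in lebesgue. x \<in> C \<longrightarrow> \<bar>\<Phi> x\<bar> \<le> L" using A4 L by simp
  have I: "\<bar>(LINT x:C|lebesgue. \<Phi> x)\<bar> \<le> L * h ^ CARD('d)"
  proof (cases "set_integrable lebesgue C \<Phi>")
    case True
    have "\<bar>(LINT x:C|lebesgue. \<Phi> x)\<bar> \<le> (LINT x:C|lebesgue. norm (\<Phi> x))"
      using set_integral_norm_bound[OF True] by simp
    also have "\<dots> \<le> (LINT x:C|lebesgue. L)"
    proof (rule set_integral_mono_AE)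
      show "set_integrable lebesgue C (\<lambda>x. norm (\<Phi> x))" using True by (rule set_integrable_norm)
      show "set_integrable lebesgue C (\<lambda>x. L)"
      proof -
        have "emeasure lebesgue C < \<infinity>" using lmeasurable_cbox[of a b] unfolding Cab fmeasurable_def by simp
        then have ii: "integrable lebesgue (indicat_real C)" using Csets by (intro integrable_real_indicator)
        have "integrable lebesgue (\<lambda>x. indicat_real C x * L)" using ii by (rule integrable_mult_left)
        then show ?thesis unfolding set_integrable_def real_scaleR_def .
      qed
      show "AE x\<in>C in lebesgue. norm (\<Phi> x) \<le> L" using A5 by simp
    qed
    also have "\<dots> = L * measure lebesgue C"
      unfolding set_lebesgue_integral_def by simp
    also have "\<dots> = L * h ^ CARD('d)" unfolding C_def cell_measure[OF h] ..
    finally show ?thesis .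
  next
    case False
    then have "(LINT x:C|lebesgue. \<Phi> x) = 0"
      unfolding set_lebesgue_integral_def set_integrable_def by (rule not_integrable_integral_eq)
    then show ?thesis using L0 h by simp
  qed
  have hp: "h ^ CARD('d) > 0" using h by simp
  have "\<bar>cell_avg h \<Phi> \<gamma>\<bar> = \<bar>(LINT x:C|lebesgue. \<Phi> x)\<bar> / h ^ CARD('d)"
    unfolding cell_avg_def C_def by (simp only: abs_divide abs_of_pos[OF hp])
  also have "\<dots> \<le> L"
  proof -
    show ?thesis unfolding pos_divide_le_eq[OF hp] using I by (simp only: mult.commute)
  qed
  finally show ?thesis unfolding E_def[symmetric] L by simp
qed




lemma int_bd_disj: "\<gamma> \<in> int_nodes \<Omega> h \<Longrightarrow> \<gamma> \<notin> bd_nodes \<Omega> h"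
  unfolding int_nodes_def bd_nodes_def frontier_def by auto

lemma prod_sign_max:
  fixes w :: "'a \<Rightarrow> real"
  assumes "a \<noteq> c" "w a \<le> w g" "w c \<le> w g"
  shows "0 \<le> (w c - w a) * ((if c = g then 1 else 0) - (if a = g then 1 else 0))"
  using assms by auto

lemma prod_sign_min:
  fixes w :: "'a \<Rightarrow> real"
  assumes "a \<noteq> c" "w g \<le> w a" "w g \<le> w c"
  shows "(w c - w a) * ((if c = g then 1 else 0) - (if a = g then 1 else 0)) \<le> 0"
  using assms by auto

lemma fdiff_prod:
  "fdiff h w \<gamma> i * fdiff h \<eta> \<gamma> i = (w (\<gamma> + axis i 1) - w \<gamma>) * (\<eta> (\<gamma> + axis i 1) - \<eta> \<gamma>) / h\<^sup>2"
  unfolding fdiff_def by (simp add: power2_eq_square)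

lemma succ_ne: "(\<gamma>::int^'d) \<noteq> \<gamma> + axis i 1"
proof
  assume "\<gamma> = \<gamma> + axis i 1"
  then have "(\<gamma> + axis i 1) $ i = \<gamma> $ i" by simp
  then show False by (simp add: axis_def)
qed

lemma delta_eq:
  fixes \<Omega> :: "(real^'d) set"
  assumes ds: "disc_state \<Omega> T n h b \<Phi> f v" and k: "k \<in> {1..n}"
    and g0: "\<gamma>0 \<in> int_nodes \<Omega> h" and h: "h > 0" and bo: "bounded \<Omega>"
  defines "\<eta> \<equiv> (\<lambda>\<gamma>. if \<gamma> = \<gamma>0 then 1 else 0 :: real)"
  shows "h ^ CARD('d) * ((b_moll b n (v \<gamma>0 k) - b_moll b n (v \<gamma>0 (k - 1))) / (T / real n) - f \<gamma>0 k)
      + (\<Sum>\<gamma>\<in>cell_idx \<Omega> h. h ^ CARD('d) * (\<Sum>i\<in>UNIV. fdiff h (\<lambda>\<mu>. v \<mu> k) \<gamma> i * fdiff h \<eta> \<gamma> i)) = 0"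
proof -
  define C where "C = cell_idx \<Omega> h"
  define A where "A \<gamma> = (b_moll b n (v \<gamma> k) - b_moll b n (v \<gamma> (k - 1))) / (T / real n)" for \<gamma>
  have g0C: "\<gamma>0 \<in> C" unfolding C_def by (rule int_nodes_cell_idx[OF h g0])
  have bd: "\<forall>\<gamma>\<in>bd_nodes \<Omega> h. \<eta> \<gamma> = 0" unfolding \<eta>_def using int_bd_disj[OF g0] by auto
  have E: "(\<Sum>\<gamma>\<in>C. h ^ CARD('d) *
            (A \<gamma> * \<eta> \<gamma> + (\<Sum>i\<in>UNIV. fdiff h (\<lambda>\<mu>. v \<mu> k) \<gamma> i * fdiff h \<eta> \<gamma> i) - f \<gamma> k * \<eta> \<gamma>)) = 0"
    using ds k bd unfolding disc_state_def A_def C_def by blast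
  have "(\<Sum>\<gamma>\<in>C. h ^ CARD('d) *
            (A \<gamma> * \<eta> \<gamma> + (\<Sum>i\<in>UNIV. fdiff h (\<lambda>\<mu>. v \<mu> k) \<gamma> i * fdiff h \<eta> \<gamma> i) - f \<gamma> k * \<eta> \<gamma>))
     = (\<Sum>\<gamma>\<in>C. (if \<gamma> = \<gamma>0 then h ^ CARD('d) * (A \<gamma>0 - f \<gamma>0 k) else 0))
       + (\<Sum>\<gamma>\<in>C. h ^ CARD('d) * (\<Sum>i\<in>UNIV. fdiff h (\<lambda>\<mu>. v \<mu> k) \<gamma> i * fdiff h \<eta> \<gamma> i))"
    unfolding sum.distrib[symmetric]
    by (rule sum.cong) (auto simp: \<eta>_def algebra_simps)
  also have "(\<Sum>\<gamma>\<in>C. (if \<gamma> = \<gamma>0 then h ^ CARD('d) * (A \<gamma>0 - f \<gamma>0 k) else 0)) = h ^ CARD('d) * (A \<gamma>0 - f \<gamma>0 k)"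
  proof -
    have "finite C" unfolding C_def by (rule finite_cell_idx[OF bo h])
    then show ?thesis using g0C by (simp add: sum.delta)
  qed
  finally show ?thesis using E unfolding A_def C_def by simp
qed


lemma step_ext:
  fixes \<Omega> :: "(real^'d) set"
  assumes ds: "disc_state \<Omega> T n h b \<Phi> f v" and k: "k \<in> {1..n}"
    and g0: "\<gamma>0 \<in> int_nodes \<Omega> h" and h: "h > 0" and bo: "bounded \<Omega>"
    and T: "T > 0" and n: "n > 0"
  shows "(\<forall>\<gamma>\<in>nodes \<Omega> h. v \<gamma> k \<le> v \<gamma>0 k) \<Longrightarrow>
           b_moll b n (v \<gamma>0 k) - b_moll b n (v \<gamma>0 (k - 1)) \<le> (T / real n) * f \<gamma>0 k"
    and "(\<forall>\<gamma>\<in>nodes \<Omega> h. v \<gamma>0 k \<le> v \<gamma> k) \<Longrightarrow>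
           (T / real n) * f \<gamma>0 k \<le> b_moll b n (v \<gamma>0 k) - b_moll b n (v \<gamma>0 (k - 1))"
proof -
  define \<eta> where "\<eta> = (\<lambda>\<gamma>. if \<gamma> = \<gamma>0 then 1 else 0 :: real)"
  define A where "A = (b_moll b n (v \<gamma>0 k) - b_moll b n (v \<gamma>0 (k - 1))) / (T / real n)"
  define S where "S = (\<Sum>\<gamma>\<in>cell_idx \<Omega> h. h ^ CARD('d) * (\<Sum>i\<in>UNIV. fdiff h (\<lambda>\<mu>. v \<mu> k) \<gamma> i * fdiff h \<eta> \<gamma> i))"
  have E: "h ^ CARD('d) * (A - f \<gamma>0 k) + S = 0"
    using delta_eq[OF ds k g0 h bo] unfolding A_def S_def \<eta>_def .
  have hp: "h ^ CARD('d) > 0" using h by simp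
  have tau: "T / real n > 0" using T n by simp
  have h2: "h\<^sup>2 > 0" using h by simp
  have Aeq: "b_moll b n (v \<gamma>0 k) - b_moll b n (v \<gamma>0 (k - 1)) = (T / real n) * A"
    unfolding A_def using tau by (metis less_irrefl nonzero_mult_div_cancel_left times_divide_eq_right)
  {
    assume mx: "\<forall>\<gamma>\<in>nodes \<Omega> h. v \<gamma> k \<le> v \<gamma>0 k"
    have "S \<ge> 0" unfolding S_def
    proof (rule sum_nonneg)
      fix \<gamma> assume gC: "\<gamma> \<in> cell_idx \<Omega> h"
      have "0 \<le> fdiff h (\<lambda>\<mu>. v \<mu> k) \<gamma> i * fdiff h \<eta> \<gamma> i" for i
        unfolding fdiff_prod
      proof (rule divide_nonneg_pos[OF _ h2])
        show "0 \<le> (v (\<gamma> + axis i 1) k - v \<gamma> k) * (\<eta> (\<gamma> + axis i 1) - \<eta> \<gamma>)"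
          unfolding \<eta>_def
          using prod_sign_max[of \<gamma> "\<gamma> + axis i 1" "\<lambda>\<mu>. v \<mu> k" \<gamma>0] succ_ne[of \<gamma> i]
            mx cell_idx_nodes[OF h gC] cell_idx_succ_nodes[OF h gC, of i] by auto
      qed
      then show "0 \<le> h ^ CARD('d) * (\<Sum>i\<in>UNIV. fdiff h (\<lambda>\<mu>. v \<mu> k) \<gamma> i * fdiff h \<eta> \<gamma> i)"
        using hp by (simp add: sum_nonneg)
    qed
    then have "h ^ CARD('d) * (A - f \<gamma>0 k) \<le> 0" using E by linarith
    then have "A \<le> f \<gamma>0 k" using hp by (simp add: mult_le_0_iff)
    then show "b_moll b n (v \<gamma>0 k) - b_moll b n (v \<gamma>0 (k - 1)) \<le> (T / real n) * f \<gamma>0 k"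
      unfolding Aeq using tau by (intro mult_left_mono) auto
  }
  {
    assume mn: "\<forall>\<gamma>\<in>nodes \<Omega> h. v \<gamma>0 k \<le> v \<gamma> k"
    have "S \<le> 0" unfolding S_def
    proof (rule sum_nonpos)
      fix \<gamma> assume gC: "\<gamma> \<in> cell_idx \<Omega> h"
      have "fdiff h (\<lambda>\<mu>. v \<mu> k) \<gamma> i * fdiff h \<eta> \<gamma> i \<le> 0" for i
        unfolding fdiff_prod
      proof (rule divide_nonpos_pos[OF _ h2])
        show "(v (\<gamma> + axis i 1) k - v \<gamma> k) * (\<eta> (\<gamma> + axis i 1) - \<eta> \<gamma>) \<le> 0"
          unfolding \<eta>_def
          using prod_sign_min[of \<gamma> "\<gamma> + axis i 1" "\<lambda>\<mu>. v \<mu> k" \<gamma>0] succ_ne[of \<gamma> i]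
            mn cell_idx_nodes[OF h gC] cell_idx_succ_nodes[OF h gC, of i] by auto
      qed
      then show "h ^ CARD('d) * (\<Sum>i\<in>UNIV. fdiff h (\<lambda>\<mu>. v \<mu> k) \<gamma> i * fdiff h \<eta> \<gamma> i) \<le> 0"
        using hp by (simp add: sum_nonpos mult_nonneg_nonpos)
    qed
    then have "h ^ CARD('d) * (A - f \<gamma>0 k) \<ge> 0" using E by linarith
    then have "f \<gamma>0 k \<le> A" using hp by (simp add: zero_le_mult_iff)
    then show "(T / real n) * f \<gamma>0 k \<le> b_moll b n (v \<gamma>0 k) - b_moll b n (v \<gamma>0 (k - 1))"
      unfolding Aeq using tau by (intro mult_left_mono) auto
  }
qed




theorem theorem3p1:
  fixes \<Omega> :: "(real^'d) set" and T h R :: real and n :: nat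
    and b :: "real \<Rightarrow> real" and \<Phi> :: "real^'d \<Rightarrow> real"
    and f v :: "int^'d \<Rightarrow> nat \<Rightarrow> real"
  assumes "open \<Omega>" and "bounded \<Omega>" and "lipschitz_boundary \<Omega>"
    and "T > 0"
    and "admissible_b b" and "b_bar b > 0"
    and "\<Phi> \<in> W12 (nbhd1 \<Omega>)" and "Linf_norm \<Omega> \<Phi> < \<infinity>"
    and "n > 0" and "h > 0"
    and "R > 0" and "\<forall>\<gamma>\<in>cell_idx \<Omega> h. \<forall>k\<in>{1..n}. \<bar>f \<gamma> k\<bar> \<le> R"
    and "disc_state \<Omega> T n h b \<Phi> f v"
  shows "\<forall>k\<le>n. \<forall>\<gamma>\<in>nodes \<Omega> h.
           ereal \<bar>v \<gamma> k\<bar> \<le> ereal (exp T) *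
             max (ereal (disc_linf \<Omega> h n f / b_bar b)) (Linf_norm \<Omega> \<Phi>)"
proof -
  note op = assms(1) and bo = assms(2) and lb = assms(3) and T = assms(4)
    and adm = assms(5) and cpos = assms(6) and fin = assms(8) and n = assms(9) and h = assms(10)
    and ds = assms(13)
  define N where "N = nodes \<Omega> h"
  define C where "C = cell_idx \<Omega> h"
  show ?thesis
  proof (cases "N = {}")
    case True
    then show ?thesis unfolding N_def by simp
  next
    case False
    have finN: "finite N" unfolding N_def by (rule finite_nodes[OF bo h])
    have finC: "finite C" unfolding C_def by (rule finite_cell_idx[OF bo h])
    obtain \<gamma>n where "\<gamma>n \<in> N" using False by blast
    then obtain \<gamma>c where \<gamma>c: "\<gamma>c \<in> C" unfolding N_def nodes_def grid_dom_def C_def by blast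
    define D where "D = disc_linf \<Omega> h n f"
    define DS where "DS = {\<bar>f \<gamma> k\<bar> | \<gamma> k. \<gamma> \<in> C \<and> k \<in> {1..n}}"
    have finDS: "finite DS" unfolding DS_def
      by (rule finite_image_set2) (use finC in auto)
    have fb: "\<bar>f \<gamma> k\<bar> \<le> D" if "\<gamma> \<in> C" "k \<in> {1..n}" for \<gamma> k
    proof -
      have "\<bar>f \<gamma> k\<bar> \<in> DS" unfolding DS_def using that by blast
      then show ?thesis unfolding D_def disc_linf_def C_def[symmetric] DS_def[symmetric]
        using finDS by (rule Max_ge[rotated])
    qed
    have D0: "0 \<le> D" using fb[OF \<gamma>c, of 1] n by auto
    define c where "c = b_bar b"
    define F where "F = D / c"
    have c0: "c > 0" using cpos unfolding c_def .
    have F0: "0 \<le> F" unfolding F_def using D0 c0 by simp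
    define \<tau> where "\<tau> = T / real n"
    have tau0: "\<tau> > 0" unfolding \<tau>_def using T n by simp
    define M0 where "M0 = Max ((\<lambda>\<gamma>. \<bar>v \<gamma> 0\<bar>) ` N)"
    have M0ge: "\<bar>v \<gamma> 0\<bar> \<le> M0" if "\<gamma> \<in> N" for \<gamma>
      unfolding M0_def using finN that by (intro Max_ge) auto
    have M00: "0 \<le> M0" using M0ge[OF \<open>\<gamma>n \<in> N\<close>] by linarith
    have vbd: "v \<gamma> k = 0" if "\<gamma> \<in> bd_nodes \<Omega> h" "k \<le> n" for \<gamma> k
      using ds that unfolding disc_state_def by blast
    have split: "\<gamma> \<in> int_nodes \<Omega> h \<or> \<gamma> \<in> bd_nodes \<Omega> h" if "\<gamma> \<in> N" for \<gamma>
      using nodes_split[OF bo h] that unfolding N_def by blast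
    have intC: "\<gamma> \<in> C" if "\<gamma> \<in> int_nodes \<Omega> h" for \<gamma>
      unfolding C_def using int_nodes_cell_idx[OF h that] .
    have claim: "k \<le> n \<longrightarrow> (\<forall>\<gamma>\<in>N. \<bar>v \<gamma> k\<bar> \<le> M0 + real k * \<tau> * F)" for k
    proof (induction k)
      case 0
      then show ?case using M0ge by simp
    next
      case (Suc k)
      show ?case
      proof
        assume kn: "Suc k \<le> n"
        have IH: "\<forall>\<gamma>\<in>N. \<bar>v \<gamma> k\<bar> \<le> M0 + real k * \<tau> * F" using Suc.IH kn by simp
        have k1: "Suc k \<in> {1..n}" using kn by simp
        have tF: "\<tau> * F \<ge> 0" using tau0 F0 by simp
        have bnd: "M0 + real k * \<tau> * F + \<tau> * F = M0 + real (Suc k) * \<tau> * F"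
          by (simp add: algebra_simps)
        have up: "v \<gamma> (Suc k) \<le> M0 + real (Suc k) * \<tau> * F" if "\<gamma> \<in> N" for \<gamma>
        proof -
          define m where "m = Max ((\<lambda>\<gamma>. v \<gamma> (Suc k)) ` N)"
          have "m \<in> (\<lambda>\<gamma>. v \<gamma> (Suc k)) ` N" unfolding m_def using finN False by (intro Max_in) auto
          then obtain \<gamma>0 where g0: "\<gamma>0 \<in> N" "v \<gamma>0 (Suc k) = m" by blast
          have mx: "\<forall>\<gamma>\<in>N. v \<gamma> (Suc k) \<le> v \<gamma>0 (Suc k)"
            unfolding g0(2) m_def using finN by auto
          have "v \<gamma>0 (Suc k) \<le> M0 + real (Suc k) * \<tau> * F"
          proof (cases "\<gamma>0 \<in> int_nodes \<Omega> h")
            case True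
            have st: "b_moll b n (v \<gamma>0 (Suc k)) - b_moll b n (v \<gamma>0 k) \<le> \<tau> * f \<gamma>0 (Suc k)"
              using step_ext(1)[OF ds k1 True h bo T n] mx unfolding N_def \<tau>_def by simp
            have "\<tau> * f \<gamma>0 (Suc k) \<le> \<tau> * D"
              using fb[OF intC[OF True] k1] tau0 by (intro mult_left_mono) auto
            then have st2: "b_moll b n (v \<gamma>0 (Suc k)) - b_moll b n (v \<gamma>0 k) \<le> \<tau> * D" using st by linarith
            have "v \<gamma>0 k \<le> M0 + real k * \<tau> * F" using IH g0(1) by fastforce
            show ?thesis
            proof (cases "v \<gamma>0 (Suc k) \<le> v \<gamma>0 k")
              case True
              then show ?thesis using \<open>v \<gamma>0 k \<le> _\<close> tF bnd by linarith
            next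
              case False
              have "c * (v \<gamma>0 (Suc k) - v \<gamma>0 k) \<le> b_moll b n (v \<gamma>0 (Suc k)) - b_moll b n (v \<gamma>0 k)"
                unfolding c_def using b_moll_growth[OF adm cpos n] False by simp
              then have "c * (v \<gamma>0 (Suc k) - v \<gamma>0 k) \<le> \<tau> * D" using st2 by linarith
              then have "v \<gamma>0 (Suc k) - v \<gamma>0 k \<le> \<tau> * D / c" using c0 by (simp add: field_simps)
              also have "\<tau> * D / c = \<tau> * F" unfolding F_def by simp
              finally show ?thesis using \<open>v \<gamma>0 k \<le> _\<close> bnd by linarith
            qed
          next
            case False
            then have "\<gamma>0 \<in> bd_nodes \<Omega> h" using split g0(1) by blast
            then have "v \<gamma>0 (Suc k) = 0" using vbd kn by blast
            then show ?thesis using M00 tF tau0 F0 by simp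
          qed
          then show ?thesis using mx that by fastforce
        qed
        have lo: "- (M0 + real (Suc k) * \<tau> * F) \<le> v \<gamma> (Suc k)" if "\<gamma> \<in> N" for \<gamma>
        proof -
          define m where "m = Min ((\<lambda>\<gamma>. v \<gamma> (Suc k)) ` N)"
          have "m \<in> (\<lambda>\<gamma>. v \<gamma> (Suc k)) ` N" unfolding m_def using finN False by (intro Min_in) auto
          then obtain \<gamma>0 where g0: "\<gamma>0 \<in> N" "v \<gamma>0 (Suc k) = m" by blast
          have mn: "\<forall>\<gamma>\<in>N. v \<gamma>0 (Suc k) \<le> v \<gamma> (Suc k)"
            unfolding g0(2) m_def using finN by auto
          have "- (M0 + real (Suc k) * \<tau> * F) \<le> v \<gamma>0 (Suc k)"
          proof (cases "\<gamma>0 \<in> int_nodes \<Omega> h")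
            case True
            have st: "\<tau> * f \<gamma>0 (Suc k) \<le> b_moll b n (v \<gamma>0 (Suc k)) - b_moll b n (v \<gamma>0 k)"
              using step_ext(2)[OF ds k1 True h bo T n] mn unfolding N_def \<tau>_def by simp
            have "- (\<tau> * D) \<le> \<tau> * f \<gamma>0 (Suc k)"
            proof -
              have "- D \<le> f \<gamma>0 (Suc k)" using fb[OF intC[OF True] k1] by linarith
              then have "\<tau> * (- D) \<le> \<tau> * f \<gamma>0 (Suc k)" using tau0 by (intro mult_left_mono) auto
              then show ?thesis by simp
            qed
            then have st2: "- (\<tau> * D) \<le> b_moll b n (v \<gamma>0 (Suc k)) - b_moll b n (v \<gamma>0 k)" using st by linarith
            have "- (M0 + real k * \<tau> * F) \<le> v \<gamma>0 k" using IH g0(1) by fastforce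
            show ?thesis
            proof (cases "v \<gamma>0 k \<le> v \<gamma>0 (Suc k)")
              case True
              then show ?thesis using \<open>- (M0 + real k * \<tau> * F) \<le> v \<gamma>0 k\<close> tF bnd by linarith
            next
              case False
              have "c * (v \<gamma>0 k - v \<gamma>0 (Suc k)) \<le> b_moll b n (v \<gamma>0 k) - b_moll b n (v \<gamma>0 (Suc k))"
                unfolding c_def using b_moll_growth[OF adm cpos n] False by simp
              then have "c * (v \<gamma>0 k - v \<gamma>0 (Suc k)) \<le> \<tau> * D" using st2 by linarith
              then have "v \<gamma>0 k - v \<gamma>0 (Suc k) \<le> \<tau> * D / c" using c0 by (simp add: field_simps)
              also have "\<tau> * D / c = \<tau> * F" unfolding F_def by simp
              finally show ?thesis using \<open>- (M0 + real k * \<tau> * F) \<le> v \<gamma>0 k\<close> bnd by linarith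
            qed
          next
            case False
            then have "\<gamma>0 \<in> bd_nodes \<Omega> h" using split g0(1) by blast
            then have "v \<gamma>0 (Suc k) = 0" using vbd kn by blast
            moreover have "0 \<le> real (Suc k) * \<tau> * F" using tau0 F0 by simp
            ultimately show ?thesis using M00 by linarith
          qed
          then show ?thesis using mn that by fastforce
        qed
        show "\<forall>\<gamma>\<in>N. \<bar>v \<gamma> (Suc k)\<bar> \<le> M0 + real (Suc k) * \<tau> * F"
          using up lo by (simp add: abs_le_iff) (smt (verit))
      qed
    qed
    define G where "G = max (ereal F) (Linf_norm \<Omega> \<Phi>)"
    have M0G: "ereal M0 \<le> G"
    proof -
      have "M0 \<in> (\<lambda>\<gamma>. \<bar>v \<gamma> 0\<bar>) ` N" unfolding M0_def using finN False by (intro Max_in) auto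
      then obtain \<gamma>m where gm: "\<gamma>m \<in> N" "M0 = \<bar>v \<gamma>m 0\<bar>" by blast
      show ?thesis
      proof (cases "\<gamma>m \<in> int_nodes \<Omega> h")
        case True
        have "v \<gamma>m 0 = cell_avg h \<Phi> \<gamma>m" using ds True unfolding disc_state_def by blast
        then have "ereal M0 \<le> Linf_norm \<Omega> \<Phi>"
          using cell_avg_bound[OF op lb h _ fin] intC[OF True] gm(2) unfolding C_def by simp
        then show ?thesis unfolding G_def by (simp add: le_max_iff_disj)
      next
        case False
        then have "\<gamma>m \<in> bd_nodes \<Omega> h" using split gm(1) by blast
        then have "M0 = 0" using vbd gm(2) by simp
        then show ?thesis unfolding G_def using F0 by (simp add: le_max_iff_disj)
      qed
    qed
    have "G < \<infinity>" unfolding G_def using fin by (simp add: max_def)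
    moreover have "ereal F \<le> G" unfolding G_def by simp
    ultimately obtain g where g: "G = ereal g" by (cases G) auto
    have gF: "F \<le> g" using \<open>ereal F \<le> G\<close> g by simp
    have gM: "M0 \<le> g" using M0G g by simp
    have g0: "0 \<le> g" using gF F0 by simp
    show ?thesis
    proof (intro allI impI ballI)
      fix k \<gamma> assume kn: "k \<le> n" and gN: "\<gamma> \<in> nodes \<Omega> h"
      have "\<bar>v \<gamma> k\<bar> \<le> M0 + real k * \<tau> * F" using claim[of k] kn gN unfolding N_def by blast
      also have "real k * \<tau> \<le> T"
      proof -
        have "real k * \<tau> \<le> real n * \<tau>" using kn tau0 by (intro mult_right_mono) auto
        also have "real n * \<tau> = T" unfolding \<tau>_def using n by simp
        finally show ?thesis .
      qed
      then have "M0 + real k * \<tau> * F \<le> M0 + T * F" using F0 by (simp add: mult_right_mono)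
      also have "\<dots> \<le> g + T * g" using gM gF T by (simp add: add_mono mult_left_mono)
      also have "\<dots> = (1 + T) * g" by (simp add: algebra_simps)
      also have "\<dots> \<le> exp T * g" using g0 by (intro mult_right_mono) (auto simp: add.commute exp_ge_add_one_self)
      finally have "\<bar>v \<gamma> k\<bar> \<le> exp T * g" .
      then show "ereal \<bar>v \<gamma> k\<bar> \<le> ereal (exp T) * max (ereal (disc_linf \<Omega> h n f / b_bar b)) (Linf_norm \<Omega> \<Phi>)"
        unfolding D_def[symmetric] c_def[symmetric] F_def[symmetric] G_def[symmetric] g by simp
    qed
  qed
qed



end
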